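(* Let $h:H\to K$ be an isomorphism between subgroups $K\subset H$ of a group $G$, and suppose there is $z\in H$ commuting with every element of $K$ such that $z^2\notin K$. Let $\mathcal F\subset\mathcal P_G$ be an $h$-invariant left-invariant ideal. If $A\subset H$ and $A\in\tau^\alpha(\mathcal F)$ for some ordinal $\alpha$, then $h(A)\cup z\,h(A)\in\tau^{\alpha+1}(\mathcal F)$.
   Context: $\mathcal F$ is $h$-invariant if for every $A\subset H$: $A\in\mathcal F$ iff $h(A)\in\mathcal F$. An ideal is closed under subsets and finite unions; left-invariant: $xF\in\mathcal F$ for $F\in\mathcal F$, $x\in G$. $\tau(\mathcal F)=\{A\subset G: xA\cap yA\in\mathcal F$ for all distinct $x,y\in G\}$, $\tau^0(\mathcal F)=\mathcal F$, $\tau^{<\alpha}(\mathcal F)=\bigcup_{\beta<\alpha}\tau^\beta(\mathcal F)$, $\tau^\alpha(\mathcal F)=\tau(\tau^{<\alpha}(\mathcal F))$ for $\alpha>0$. *)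

theory Defs
  imports "HOL-Algebra.Coset"
begin

definition tau :: "('a, 'b) monoid_scheme \<Rightarrow> 'a set set \<Rightarrow> 'a set set" where
  "tau G F = {A. A \<subseteq> carrier G \<and>
     (\<forall>x\<in>carrier G. \<forall>y\<in>carrier G. x \<noteq> y \<longrightarrow> (x <#\<^bsub>G\<^esub> A) \<inter> (y <#\<^bsub>G\<^esub> A) \<in> F)}"

text \<open>Ordinals are represented by elements of a
  well-order r (a non-strict well-order relation): the element a of Field r stands for
  the order type alpha of its strict initial segment.\<close>
definition tau_iter :: "('a, 'b) monoid_scheme \<Rightarrow> 'a set set \<Rightarrow> 'o rel \<Rightarrow> 'o \<Rightarrow> 'a set set" where
  "tau_iter G F r = wfrec (r - Id)
     (\<lambda>rec a. if (\<exists>b. (b, a) \<in> r - Id)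
              then tau G (\<Union> {rec b | b. (b, a) \<in> r - Id})
              else F)"

definition left_invariant_ideal :: "('a, 'b) monoid_scheme \<Rightarrow> 'a set set \<Rightarrow> bool" where
  "left_invariant_ideal G F \<longleftrightarrow>
     F \<subseteq> Pow (carrier G) \<and>
     (\<forall>A\<in>F. \<forall>B. B \<subseteq> A \<longrightarrow> B \<in> F) \<and>
     (\<forall>A\<in>F. \<forall>B\<in>F. A \<union> B \<in> F) \<and>
     (\<forall>A\<in>F. \<forall>x\<in>carrier G. x <#\<^bsub>G\<^esub> A \<in> F)"

definition h_invariant :: "('a \<Rightarrow> 'a) \<Rightarrow> 'a set \<Rightarrow> 'a set set \<Rightarrow> bool" where
  "h_invariant h H F \<longleftrightarrow> (\<forall>A. A \<subseteq> H \<longrightarrow> (A \<in> F \<longleftrightarrow> h ` A \<in> F))"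

end

theory Submission
  imports Defs
begin

lemma setcompr_cong: "(\<And>b. P b \<Longrightarrow> f b = g b) \<Longrightarrow> {f b | b. P b} = {g b | b. P b}"
  by auto metis+

lemma tau_iter_eq:
  assumes "Well_order r"
  shows "tau_iter G F r a = (if (\<exists>b. (b, a) \<in> r - Id)
              then tau G (\<Union> {tau_iter G F r b | b. (b, a) \<in> r - Id})
              else F)"
proof -
  have wf: "wf (r - Id)" using assms by (simp add: well_order_on_def)
  show ?thesis
    unfolding tau_iter_def
    apply (subst wfrec[OF wf])
    apply (intro if_cong refl arg_cong[where f="tau G"] arg_cong[where f=Union])
    apply (rule setcompr_cong)
    apply (simp add: cut_apply)
    done
qed

lemma tau_iter_min: "Well_order r \<Longrightarrow> \<not> (\<exists>b. (b, a) \<in> r - Id) \<Longrightarrow> tau_iter G F r a = F"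
  by (subst tau_iter_eq) auto

lemma tau_iter_suc: "Well_order r \<Longrightarrow> (\<exists>b. (b, a) \<in> r - Id) \<Longrightarrow>
   tau_iter G F r a = tau G (\<Union> {tau_iter G F r b | b. (b, a) \<in> r - Id})"
  by (subst tau_iter_eq) auto

lemma mem_lcos: "w \<in> x <#\<^bsub>G\<^esub> A \<longleftrightarrow> (\<exists>a\<in>A. w = x \<otimes>\<^bsub>G\<^esub> a)"
  by (auto simp: l_coset_def)

lemma lcos_mono: "B \<subseteq> A \<Longrightarrow> x <#\<^bsub>G\<^esub> B \<subseteq> x <#\<^bsub>G\<^esub> A"
  by (auto simp: l_coset_def)

context group begin
lemma A1: "c1 \<in> carrier G \<Longrightarrow> c2 \<in> carrier G \<Longrightarrow> g \<in> carrier G \<Longrightarrow> c1 = g \<otimes> c2 \<Longrightarrow> g = c1 \<otimes> inv c2"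
  by (simp add: inv_solve_right)
lemma A2: "c1 \<in> carrier G \<Longrightarrow> c2 \<in> carrier G \<Longrightarrow> g \<in> carrier G \<Longrightarrow> z \<in> carrier G \<Longrightarrow> z \<otimes> c1 = g \<otimes> c2 \<Longrightarrow> g = z \<otimes> (c1 \<otimes> inv c2)"
  by (metis inv_solve_right m_assoc m_closed inv_closed)
lemma A3: "c1 \<in> carrier G \<Longrightarrow> c2 \<in> carrier G \<Longrightarrow> g \<in> carrier G \<Longrightarrow> z \<in> carrier G \<Longrightarrow> c1 = g \<otimes> (z \<otimes> c2) \<Longrightarrow> g \<otimes> z = c1 \<otimes> inv c2"
  by (metis inv_solve_right m_assoc m_closed)
lemma A4: "c1 \<in> carrier G \<Longrightarrow> c2 \<in> carrier G \<Longrightarrow> g \<in> carrier G \<Longrightarrow> z \<in> carrier G \<Longrightarrow>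
   z \<otimes> (c1 \<otimes> inv c2) = (c1 \<otimes> inv c2) \<otimes> z \<Longrightarrow> z \<otimes> c1 = g \<otimes> (z \<otimes> c2) \<Longrightarrow> g = c1 \<otimes> inv c2"
proof -
  assume c: "c1 \<in> carrier G" "c2 \<in> carrier G" "g \<in> carrier G" "z \<in> carrier G"
    and cm: "z \<otimes> (c1 \<otimes> inv c2) = (c1 \<otimes> inv c2) \<otimes> z" and e: "z \<otimes> c1 = g \<otimes> (z \<otimes> c2)"
  have "c1 = (c1 \<otimes> inv c2) \<otimes> c2" using c by (simp add: m_assoc)
  then have "z \<otimes> c1 = (z \<otimes> (c1 \<otimes> inv c2)) \<otimes> c2" using c by (metis m_assoc m_closed inv_closed)
  also have "\<dots> = (c1 \<otimes> inv c2) \<otimes> (z \<otimes> c2)" using c cm by (simp add: m_assoc)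
  finally have "g \<otimes> (z \<otimes> c2) = (c1 \<otimes> inv c2) \<otimes> (z \<otimes> c2)" using e by simp
  then show ?thesis using c by (metis m_closed inv_closed right_cancel)
qed
lemma A5: "c1 \<in> carrier G \<Longrightarrow> c2 \<in> carrier G \<Longrightarrow> g \<in> carrier G \<Longrightarrow> z \<in> carrier G \<Longrightarrow>
   z \<otimes> g = g \<otimes> z \<Longrightarrow> z \<otimes> c1 = g \<otimes> (z \<otimes> c2) \<Longrightarrow> c1 = g \<otimes> c2"
  by (metis m_assoc m_closed Units_eq Units_l_cancel)
lemma A6: "z \<in> carrier G \<Longrightarrow> k \<in> carrier G \<Longrightarrow> k' \<in> carrier G \<Longrightarrow>
   z \<otimes> k' = k' \<otimes> z \<Longrightarrow> (z \<otimes> k') \<otimes> z = k \<Longrightarrow> z \<otimes> z = k \<otimes> inv k'"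
  by (metis m_assoc inv_solve_right m_closed)
lemma A7: "z \<in> carrier G \<Longrightarrow> k \<in> carrier G \<Longrightarrow> g \<in> carrier G \<Longrightarrow> g \<otimes> z = k \<Longrightarrow> z = inv g \<otimes> k"
  by (simp add: inv_solve_left)
end

lemma tau_carrier:
  assumes "Well_order r" "left_invariant_ideal G F" "X \<in> tau_iter G F r c"
  shows "X \<subseteq> carrier G"
  using assms unfolding tau_iter_eq[OF assms(1), of G F c]
  by (auto simp: tau_def left_invariant_ideal_def split: if_splits)

lemma tau_down:
  assumes wo: "Well_order r" and F: "left_invariant_ideal G F"
  shows "X \<in> tau_iter G F r c \<Longrightarrow> Y \<subseteq> X \<Longrightarrow> Y \<in> tau_iter G F r c"
proof -
  have wf: "wf (r - Id)" using wo by (simp add: well_order_on_def)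
  show "X \<in> tau_iter G F r c \<Longrightarrow> Y \<subseteq> X \<Longrightarrow> Y \<in> tau_iter G F r c"
  proof (induction c arbitrary: X Y rule: wf_induct[OF wf])
    case (1 c)
    show ?case
    proof (cases "\<exists>b. (b, c) \<in> r - Id")
      case False
      then show ?thesis using 1(2,3) F tau_iter_min[OF wo False, of G F]
        by (auto simp: left_invariant_ideal_def)
    next
      case True
      have X: "X \<in> tau G (\<Union> {tau_iter G F r b | b. (b, c) \<in> r - Id})"
        using 1(2) True unfolding tau_iter_eq[OF wo, of G F c] by simp
      have "Y \<in> tau G (\<Union> {tau_iter G F r b | b. (b, c) \<in> r - Id})"
        unfolding tau_def
      proof (intro CollectI conjI ballI impI)
        show "Y \<subseteq> carrier G" using X 1(3) by (auto simp: tau_def)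
        fix x y assume xy: "x \<in> carrier G" "y \<in> carrier G" "x \<noteq> y"
        then have "(x <#\<^bsub>G\<^esub> X) \<inter> (y <#\<^bsub>G\<^esub> X) \<in> \<Union> {tau_iter G F r b | b. (b, c) \<in> r - Id}"
          using X by (auto simp: tau_def)
        then obtain b where b: "(b, c) \<in> r - Id" "(x <#\<^bsub>G\<^esub> X) \<inter> (y <#\<^bsub>G\<^esub> X) \<in> tau_iter G F r b"
          by blast
        have "(x <#\<^bsub>G\<^esub> Y) \<inter> (y <#\<^bsub>G\<^esub> Y) \<subseteq> (x <#\<^bsub>G\<^esub> X) \<inter> (y <#\<^bsub>G\<^esub> X)"
          using lcos_mono[OF 1(3)] by blast
        then have "(x <#\<^bsub>G\<^esub> Y) \<inter> (y <#\<^bsub>G\<^esub> Y) \<in> tau_iter G F r b"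
          using 1(1) b by blast
        then show "(x <#\<^bsub>G\<^esub> Y) \<inter> (y <#\<^bsub>G\<^esub> Y) \<in> \<Union> {tau_iter G F r b | b. (b, c) \<in> r - Id}"
          using b(1) by blast
      qed
      then show ?thesis using True unfolding tau_iter_eq[OF wo, of G F c] by simp
    qed
  qed
qed

lemma tau_linv:
  assumes grp: "group G" and wo: "Well_order r" and F: "left_invariant_ideal G F"
    and X: "X \<in> tau_iter G F r c" and g: "g \<in> carrier G"
  shows "g <#\<^bsub>G\<^esub> X \<in> tau_iter G F r c"
proof (cases "\<exists>b. (b, c) \<in> r - Id")
  case False
  then show ?thesis using X g F tau_iter_min[OF wo False, of G F]
    by (auto simp: left_invariant_ideal_def)
next
  case True
  interpret group G by (rule grp)
  let ?S = "\<Union> {tau_iter G F r b | b. (b, c) \<in> r - Id}"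
  have X': "X \<in> tau G ?S"
    using X True unfolding tau_iter_eq[OF wo, of G F c] by simp
  have Xc: "X \<subseteq> carrier G" using X' by (simp add: tau_def)
  have "g <#\<^bsub>G\<^esub> X \<in> tau G ?S"
    unfolding tau_def
  proof (intro CollectI conjI ballI impI)
    show "g <#\<^bsub>G\<^esub> X \<subseteq> carrier G" using Xc g by (auto simp: l_coset_def)
    fix x y assume xy: "x \<in> carrier G" "y \<in> carrier G" "x \<noteq> y"
    have "x \<otimes>\<^bsub>G\<^esub> g \<noteq> y \<otimes>\<^bsub>G\<^esub> g" using xy g by simp
    then have "((x \<otimes>\<^bsub>G\<^esub> g) <#\<^bsub>G\<^esub> X) \<inter> ((y \<otimes>\<^bsub>G\<^esub> g) <#\<^bsub>G\<^esub> X) \<in> ?S"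
      using X' xy g by (auto simp: tau_def)
    then show "(x <#\<^bsub>G\<^esub> (g <#\<^bsub>G\<^esub> X)) \<inter> (y <#\<^bsub>G\<^esub> (g <#\<^bsub>G\<^esub> X)) \<in> ?S"
      using lcos_m_assoc[OF Xc xy(1) g] lcos_m_assoc[OF Xc xy(2) g] by simp
  qed
  then show ?thesis using True unfolding tau_iter_eq[OF wo, of G F c] by simp
qed

lemma iso_facts:
  assumes "h \<in> iso (G\<lparr>carrier := H\<rparr>) (G\<lparr>carrier := K\<rparr>)"
  shows "\<forall>a\<in>H. h a \<in> K" "\<forall>a\<in>H. \<forall>b\<in>H. h (a \<otimes>\<^bsub>G\<^esub> b) = h a \<otimes>\<^bsub>G\<^esub> h b"
    "inj_on h H" "h ` H = K"
  using assms by (auto simp: iso_def hom_def bij_betw_def)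

lemma solve_eq:
  assumes "group G" "x \<in> carrier G" "y \<in> carrier G" "b1 \<in> carrier G" "b2 \<in> carrier G"
    "x \<otimes>\<^bsub>G\<^esub> b1 = y \<otimes>\<^bsub>G\<^esub> b2"
  shows "b1 = (inv\<^bsub>G\<^esub> x \<otimes>\<^bsub>G\<^esub> y) \<otimes>\<^bsub>G\<^esub> b2"
proof -
  interpret group G by fact
  have "b1 = inv\<^bsub>G\<^esub> x \<otimes>\<^bsub>G\<^esub> (y \<otimes>\<^bsub>G\<^esub> b2)"
    using assms inv_solve_left by (metis m_closed)
  then show ?thesis using assms by (simp add: m_assoc)
qed

lemma solve_ne:
  assumes "group G" "x \<in> carrier G" "y \<in> carrier G" "x \<noteq> y"
  shows "inv\<^bsub>G\<^esub> x \<otimes>\<^bsub>G\<^esub> y \<noteq> \<one>\<^bsub>G\<^esub>"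
proof -
  interpret group G by fact
  show ?thesis using assms inv_solve_left' by (metis one_closed r_one)
qed

lemma tau_h:
  assumes grp: "group G" and wo: "Well_order r" and F: "left_invariant_ideal G F"
    and sH: "subgroup H G" and sK: "subgroup K G" and KH: "K \<subseteq> H"
    and iso: "h \<in> iso (G\<lparr>carrier := H\<rparr>) (G\<lparr>carrier := K\<rparr>)"
    and hinv: "h_invariant h H F"
    and u: "u \<in> carrier G" "u \<noteq> \<one>\<^bsub>G\<^esub>"
  shows "A \<subseteq> H \<Longrightarrow> A \<in> tau_iter G F r c \<Longrightarrow> h ` A \<in> tau_iter G F r c"
proof -
  interpret group G by (rule grp)
  have wf: "wf (r - Id)" using wo by (simp add: well_order_on_def)
  note hf = iso_facts[OF iso]
  have Hc: "H \<subseteq> carrier G" using sH by (simp add: subgroup_def)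
  have Kc: "K \<subseteq> carrier G" using sK by (simp add: subgroup_def)
  show "A \<subseteq> H \<Longrightarrow> A \<in> tau_iter G F r c \<Longrightarrow> h ` A \<in> tau_iter G F r c"
  proof (induction c arbitrary: A rule: wf_induct[OF wf])
    case (1 c)
    show ?case
    proof (cases "\<exists>b. (b, c) \<in> r - Id")
      case False
      then show ?thesis using 1(2,3) hinv tau_iter_min[OF wo False, of G F]
        by (auto simp: h_invariant_def)
    next
      case True
      let ?S = "\<Union> {tau_iter G F r b | b. (b, c) \<in> r - Id}"
      have A: "A \<in> tau G ?S"
        using 1(3) True tau_iter_suc[OF wo True, of G F] by simp
      have Ac: "A \<subseteq> carrier G" using 1(2) Hc by blast
      have one_A: "\<one>\<^bsub>G\<^esub> <#\<^bsub>G\<^esub> A = A"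
        using Ac by (force simp: l_coset_def)
      have inS: "Z \<in> ?S" if "Z \<subseteq> W" "W \<in> ?S" for Z W
        using that tau_down[OF wo F] by blast
      have hAc: "h ` A \<subseteq> carrier G" using 1(2) hf(1) Kc by blast
      have "h ` A \<in> tau G ?S"
        unfolding tau_def
      proof (intro CollectI conjI ballI impI)
        show "h ` A \<subseteq> carrier G" by (fact hAc)
        fix x y assume xy: "x \<in> carrier G" "y \<in> carrier G" "x \<noteq> y"
        define g where "g = inv\<^bsub>G\<^esub> x \<otimes>\<^bsub>G\<^esub> y"
        have gc: "g \<in> carrier G" using xy by (simp add: g_def)
        have eq: "h a1 = g \<otimes>\<^bsub>G\<^esub> h a2" if "a1 \<in> A" "a2 \<in> A"
          "x \<otimes>\<^bsub>G\<^esub> h a1 = y \<otimes>\<^bsub>G\<^esub> h a2" for a1 a2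
        proof -
          have "h a1 \<in> carrier G" "h a2 \<in> carrier G" using that(1,2) hAc by auto
          then show ?thesis unfolding g_def by (rule solve_eq[OF grp xy(1,2) _ _ that(3)])
        qed
        show "(x <#\<^bsub>G\<^esub> h ` A) \<inter> (y <#\<^bsub>G\<^esub> h ` A) \<in> ?S"
        proof (cases "g \<in> K")
          case True
          then obtain k where k: "k \<in> H" "h k = g" using hf(4) by blast
          have "k \<noteq> \<one>\<^bsub>G\<^esub>"
          proof
            assume "k = \<one>\<^bsub>G\<^esub>"
            have o: "\<one>\<^bsub>G\<^esub> \<in> H" by (rule subgroup.one_closed[OF sH])
            have "h (\<one>\<^bsub>G\<^esub> \<otimes>\<^bsub>G\<^esub> \<one>\<^bsub>G\<^esub>) = h \<one>\<^bsub>G\<^esub> \<otimes>\<^bsub>G\<^esub> h \<one>\<^bsub>G\<^esub>"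
              using hf(2) o by blast
            then have e: "h \<one>\<^bsub>G\<^esub> \<otimes>\<^bsub>G\<^esub> h \<one>\<^bsub>G\<^esub> = h \<one>\<^bsub>G\<^esub>" by simp
            have "h \<one>\<^bsub>G\<^esub> \<in> carrier G" using hf(1) o Kc by blast
            then have "h \<one>\<^bsub>G\<^esub> = \<one>\<^bsub>G\<^esub>" using e r_cancel_one by blast
            then have "h k = \<one>\<^bsub>G\<^esub>" using \<open>k = \<one>\<^bsub>G\<^esub>\<close> by simp
            then show False using solve_ne[OF grp xy] k g_def by simp
          qed
          then have "(\<one>\<^bsub>G\<^esub> <#\<^bsub>G\<^esub> A) \<inter> (k <#\<^bsub>G\<^esub> A) \<in> ?S"
            using A k Hc by (auto simp: tau_def)
          then have "A \<inter> (k <#\<^bsub>G\<^esub> A) \<in> ?S" using one_A by simp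
          then obtain d where d: "(d, c) \<in> r - Id" "A \<inter> (k <#\<^bsub>G\<^esub> A) \<in> tau_iter G F r d"
            by blast
          have "h ` (A \<inter> (k <#\<^bsub>G\<^esub> A)) \<in> tau_iter G F r d"
            using 1(1) d 1(2) by blast
          then have T: "x <#\<^bsub>G\<^esub> h ` (A \<inter> (k <#\<^bsub>G\<^esub> A)) \<in> tau_iter G F r d"
            using tau_linv[OF grp wo F _ xy(1)] by blast
          have "(x <#\<^bsub>G\<^esub> h ` A) \<inter> (y <#\<^bsub>G\<^esub> h ` A) \<subseteq> x <#\<^bsub>G\<^esub> h ` (A \<inter> (k <#\<^bsub>G\<^esub> A))"
          proof
            fix w assume "w \<in> (x <#\<^bsub>G\<^esub> h ` A) \<inter> (y <#\<^bsub>G\<^esub> h ` A)"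
            then obtain a1 a2 where a: "a1 \<in> A" "a2 \<in> A" "w = x \<otimes>\<^bsub>G\<^esub> h a1" "w = y \<otimes>\<^bsub>G\<^esub> h a2"
              by (auto simp: mem_lcos)
            have "h a1 = h k \<otimes>\<^bsub>G\<^esub> h a2" using eq[OF a(1,2)] a k by simp
            also have "\<dots> = h (k \<otimes>\<^bsub>G\<^esub> a2)" using hf(2) k(1) a(2) 1(2) by auto
            finally have "a1 = k \<otimes>\<^bsub>G\<^esub> a2"
              using hf(3) a(1,2) 1(2) k(1) subgroup.m_closed[OF sH]
              by (meson inj_onD subsetD)
            then have "a1 \<in> A \<inter> (k <#\<^bsub>G\<^esub> A)" using a by (auto simp: mem_lcos)
            then have "h a1 \<in> h ` (A \<inter> (k <#\<^bsub>G\<^esub> A))" by (rule imageI)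
            then show "w \<in> x <#\<^bsub>G\<^esub> h ` (A \<inter> (k <#\<^bsub>G\<^esub> A))"
              using a(3) unfolding mem_lcos by blast
          qed
          then show ?thesis using T tau_down[OF wo F] d(1) by blast
        next
          case False
          have empty: "(x <#\<^bsub>G\<^esub> h ` A) \<inter> (y <#\<^bsub>G\<^esub> h ` A) = {}"
          proof (rule ccontr)
            assume "(x <#\<^bsub>G\<^esub> h ` A) \<inter> (y <#\<^bsub>G\<^esub> h ` A) \<noteq> {}"
            then obtain a1 a2 where a: "a1 \<in> A" "a2 \<in> A" "x \<otimes>\<^bsub>G\<^esub> h a1 = y \<otimes>\<^bsub>G\<^esub> h a2"
              by (auto simp: mem_lcos)
            have k1: "h a1 \<in> K" "h a2 \<in> K" using a hf(1) 1(2) by auto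
            have "g = h a1 \<otimes>\<^bsub>G\<^esub> inv\<^bsub>G\<^esub> h a2"
              using eq[OF a] k1 Kc gc inv_solve_right by blast
            then have "g \<in> K" using k1 sK by (simp add: subgroup.m_closed subgroup.m_inv_closed)
            then show False using False by simp
          qed
          have "(\<one>\<^bsub>G\<^esub> <#\<^bsub>G\<^esub> A) \<inter> (u <#\<^bsub>G\<^esub> A) \<in> ?S"
            using A u by (auto simp: tau_def)
          then show ?thesis unfolding empty by (rule inS[OF empty_subsetI])
        qed
      qed
      then show ?thesis using tau_iter_suc[OF wo True, of G F] by simp
    qed
  qed
qed

lemma main_M:
  assumes grp: "group G" and wo: "Well_order r" and F: "left_invariant_ideal G F"
    and sK: "subgroup K G" and z: "z \<in> carrier G"
    and comm: "\<forall>k\<in>K. z \<otimes>\<^bsub>G\<^esub> k = k \<otimes>\<^bsub>G\<^esub> z"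
    and zz: "z \<otimes>\<^bsub>G\<^esub> z \<notin> K"
  shows "C \<subseteq> K \<Longrightarrow> C \<in> tau_iter G F r a \<Longrightarrow> (a, b) \<in> r - Id \<Longrightarrow>
         C \<union> (z <#\<^bsub>G\<^esub> C) \<in> tau_iter G F r b"
proof -
  interpret group G by (rule grp)
  have wf: "wf (r - Id)" using wo by (simp add: well_order_on_def)
  have Kc: "K \<subseteq> carrier G" using sK by (simp add: subgroup_def)
  have zK: "z \<notin> K" using zz subgroup.m_closed[OF sK] by blast
  have Kmi: "k1 \<otimes>\<^bsub>G\<^esub> inv\<^bsub>G\<^esub> k2 \<in> K" if "k1 \<in> K" "k2 \<in> K" for k1 k2
    using that sK by (simp add: subgroup.m_closed subgroup.m_inv_closed)
  show "C \<subseteq> K \<Longrightarrow> C \<in> tau_iter G F r a \<Longrightarrow> (a, b) \<in> r - Id \<Longrightarrow>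
         C \<union> (z <#\<^bsub>G\<^esub> C) \<in> tau_iter G F r b"
  proof (induction a arbitrary: C b rule: wf_induct[OF wf])
    case (1 a)
    have bsuc: "\<exists>a'. (a', b) \<in> r - Id" using 1(4) by blast
    let ?S = "\<Union> {tau_iter G F r c | c. (c, b) \<in> r - Id}"
    have Cc: "C \<subseteq> carrier G" using 1(2) Kc by blast
    have zCc: "z <#\<^bsub>G\<^esub> C \<subseteq> carrier G" using Cc z by (auto simp: l_coset_def)
    have one_C: "\<one>\<^bsub>G\<^esub> <#\<^bsub>G\<^esub> C = C"
      using Cc by (force simp: l_coset_def)
    have zC: "z <#\<^bsub>G\<^esub> C \<in> tau_iter G F r a" using tau_linv[OF grp wo F 1(3) z] .
    have "C \<union> (z <#\<^bsub>G\<^esub> C) \<in> tau G ?S"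
      unfolding tau_def
    proof (intro CollectI conjI ballI impI)
      show "C \<union> (z <#\<^bsub>G\<^esub> C) \<subseteq> carrier G" using Cc zCc by blast
      fix x y assume xy: "x \<in> carrier G" "y \<in> carrier G" "x \<noteq> y"
      define g where "g = inv\<^bsub>G\<^esub> x \<otimes>\<^bsub>G\<^esub> y"
      have gc: "g \<in> carrier G" using xy by (simp add: g_def)
      let ?B = "C \<union> (z <#\<^bsub>G\<^esub> C)"
      have Bc: "?B \<subseteq> carrier G" using Cc zCc by blast
      have memB: "\<And>w. w \<in> ?B \<Longrightarrow> w \<in> C \<or> (\<exists>c\<in>C. w = z \<otimes>\<^bsub>G\<^esub> c)"
        by (auto simp: mem_lcos)
      have cK: "\<And>c. c \<in> C \<Longrightarrow> c \<in> K" "\<And>c. c \<in> C \<Longrightarrow> c \<in> carrier G"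
        using 1(2) Kc by auto
      have "\<exists>E. E \<in> tau_iter G F r a \<and> (\<forall>b1\<in>?B. \<forall>b2\<in>?B. b1 = g \<otimes>\<^bsub>G\<^esub> b2 \<longrightarrow> b1 \<in> E)"
      proof (cases "g \<in> K")
        case True
        define D where "D = C \<inter> (g <#\<^bsub>G\<^esub> C)"
        have gz: "z \<otimes>\<^bsub>G\<^esub> g = g \<otimes>\<^bsub>G\<^esub> z" using comm True by blast
        have DK: "D \<subseteq> K" using 1(2) by (auto simp: D_def)
        have E: "D \<union> (z <#\<^bsub>G\<^esub> D) \<in> tau_iter G F r a"
        proof (cases "\<exists>c. (c, a) \<in> r - Id")
          case False
          have "C \<union> (z <#\<^bsub>G\<^esub> C) \<in> F"
            using 1(3) zC F tau_iter_min[OF wo False, of G F] by (auto simp: left_invariant_ideal_def)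
          moreover have "D \<union> (z <#\<^bsub>G\<^esub> D) \<subseteq> C \<union> (z <#\<^bsub>G\<^esub> C)"
            using lcos_mono[of D C] by (auto simp: D_def)
          ultimately show ?thesis using F tau_iter_min[OF wo False, of G F]
            by (auto simp: left_invariant_ideal_def)
        next
          case True2: True
          have "C \<in> tau G (\<Union> {tau_iter G F r c | c. (c, a) \<in> r - Id})"
            using 1(3) tau_iter_suc[OF wo True2, of G F] by simp
          moreover have "g \<noteq> \<one>\<^bsub>G\<^esub>" using solve_ne[OF grp xy] g_def by simp
          ultimately have "(\<one>\<^bsub>G\<^esub> <#\<^bsub>G\<^esub> C) \<inter> (g <#\<^bsub>G\<^esub> C) \<in> \<Union> {tau_iter G F r c | c. (c, a) \<in> r - Id}"
            using gc by (auto simp: tau_def)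
          then obtain d where d: "(d, a) \<in> r - Id" "D \<in> tau_iter G F r d"
            using one_C by (auto simp: D_def)
          show ?thesis using 1(1) d DK by blast
        qed
        have P: "b1 \<in> D \<union> (z <#\<^bsub>G\<^esub> D)" if bb: "b1 \<in> ?B" "b2 \<in> ?B" "b1 = g \<otimes>\<^bsub>G\<^esub> b2" for b1 b2
        proof -
          consider (a) "b1 \<in> C" "b2 \<in> C"
            | (b) c1 c2 where "c1 \<in> C" "c2 \<in> C" "b1 = z \<otimes>\<^bsub>G\<^esub> c1" "b2 = z \<otimes>\<^bsub>G\<^esub> c2"
            | (c) c2 where "b1 \<in> C" "c2 \<in> C" "b2 = z \<otimes>\<^bsub>G\<^esub> c2"
            | (d) c1 where "c1 \<in> C" "b2 \<in> C" "b1 = z \<otimes>\<^bsub>G\<^esub> c1"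
            using memB[OF bb(1)] memB[OF bb(2)] by blast
          then show ?thesis
          proof cases
            case a then show ?thesis using bb(3) by (auto simp: D_def mem_lcos)
          next
            case (b c1 c2)
            have "c1 = g \<otimes>\<^bsub>G\<^esub> c2"
              using group.A5[OF grp cK(2)[OF b(1)] cK(2)[OF b(2)] gc z gz] b(3,4) \<open>b1 = g \<otimes>\<^bsub>G\<^esub> b2\<close> by simp
            then have "c1 \<in> D" using b by (auto simp: D_def mem_lcos)
            then show ?thesis using b(3) by (auto simp: mem_lcos)
          next
            case (c c2)
            have "g \<otimes>\<^bsub>G\<^esub> z = b1 \<otimes>\<^bsub>G\<^esub> inv\<^bsub>G\<^esub> c2"
              using group.A3[OF grp cK(2)[OF c(1)] cK(2)[OF c(2)] gc z] c(3) \<open>b1 = g \<otimes>\<^bsub>G\<^esub> b2\<close> by simp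
            then have "z = inv\<^bsub>G\<^esub> g \<otimes>\<^bsub>G\<^esub> (b1 \<otimes>\<^bsub>G\<^esub> inv\<^bsub>G\<^esub> c2)"
              using group.A7[OF grp z _ gc] cK c by simp
            moreover have "b1 \<otimes>\<^bsub>G\<^esub> inv\<^bsub>G\<^esub> c2 \<in> K" using Kmi cK c by blast
            ultimately have "z \<in> K" using True sK by (simp add: subgroup.m_closed subgroup.m_inv_closed)
            then show ?thesis using zK by simp
          next
            case (d c1)
            have "g = z \<otimes>\<^bsub>G\<^esub> (c1 \<otimes>\<^bsub>G\<^esub> inv\<^bsub>G\<^esub> b2)"
              using group.A2[OF grp cK(2)[OF d(1)] cK(2)[OF d(2)] gc z] d(3) \<open>b1 = g \<otimes>\<^bsub>G\<^esub> b2\<close> by simp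
            moreover have k: "c1 \<otimes>\<^bsub>G\<^esub> inv\<^bsub>G\<^esub> b2 \<in> K" using Kmi cK d by blast
            ultimately have "z = g \<otimes>\<^bsub>G\<^esub> inv\<^bsub>G\<^esub> (c1 \<otimes>\<^bsub>G\<^esub> inv\<^bsub>G\<^esub> b2)"
              using k Kc z gc by (simp add: inv_solve_right subsetD)
            then have "z \<in> K" using True k sK by (simp add: subgroup.m_closed subgroup.m_inv_closed)
            then show ?thesis using zK by simp
          qed
        qed
        show ?thesis using E P by blast
      next
        case False
        define E where "E = (if \<exists>k\<in>K. g = z \<otimes>\<^bsub>G\<^esub> k then z <#\<^bsub>G\<^esub> C else C)"
        have E: "E \<in> tau_iter G F r a" using 1(3) zC by (simp add: E_def)
        have P: "b1 \<in> E" if bb: "b1 \<in> ?B" "b2 \<in> ?B" "b1 = g \<otimes>\<^bsub>G\<^esub> b2" for b1 b2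
        proof -
          consider (a) "b1 \<in> C" "b2 \<in> C"
            | (b) c1 c2 where "c1 \<in> C" "c2 \<in> C" "b1 = z \<otimes>\<^bsub>G\<^esub> c1" "b2 = z \<otimes>\<^bsub>G\<^esub> c2"
            | (c) c2 where "b1 \<in> C" "c2 \<in> C" "b2 = z \<otimes>\<^bsub>G\<^esub> c2"
            | (d) c1 where "c1 \<in> C" "b2 \<in> C" "b1 = z \<otimes>\<^bsub>G\<^esub> c1"
            using memB[OF bb(1)] memB[OF bb(2)] by blast
          then show ?thesis
          proof cases
            case a
            have "g = b1 \<otimes>\<^bsub>G\<^esub> inv\<^bsub>G\<^esub> b2"
              using group.A1[OF grp cK(2)[OF a(1)] cK(2)[OF a(2)] gc bb(3)] .
            then have "g \<in> K" using Kmi cK a by blast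
            then show ?thesis using False by simp
          next
            case (b c1 c2)
            have k: "c1 \<otimes>\<^bsub>G\<^esub> inv\<^bsub>G\<^esub> c2 \<in> K" using Kmi cK b by blast
            have "g = c1 \<otimes>\<^bsub>G\<^esub> inv\<^bsub>G\<^esub> c2"
              using group.A4[OF grp cK(2)[OF b(1)] cK(2)[OF b(2)] gc z] comm k b(3,4) \<open>b1 = g \<otimes>\<^bsub>G\<^esub> b2\<close> by simp
            then show ?thesis using False k by simp
          next
            case (c c2)
            have k: "b1 \<otimes>\<^bsub>G\<^esub> inv\<^bsub>G\<^esub> c2 \<in> K" using Kmi cK c by blast
            have gz: "g \<otimes>\<^bsub>G\<^esub> z = b1 \<otimes>\<^bsub>G\<^esub> inv\<^bsub>G\<^esub> c2"
              using group.A3[OF grp cK(2)[OF c(1)] cK(2)[OF c(2)] gc z] c(3) \<open>b1 = g \<otimes>\<^bsub>G\<^esub> b2\<close> by simp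
            have "\<not> (\<exists>k\<in>K. g = z \<otimes>\<^bsub>G\<^esub> k)"
            proof
              assume "\<exists>k\<in>K. g = z \<otimes>\<^bsub>G\<^esub> k"
              then obtain k' where k': "k' \<in> K" "g = z \<otimes>\<^bsub>G\<^esub> k'" by blast
              have "z \<otimes>\<^bsub>G\<^esub> z = (b1 \<otimes>\<^bsub>G\<^esub> inv\<^bsub>G\<^esub> c2) \<otimes>\<^bsub>G\<^esub> inv\<^bsub>G\<^esub> k'"
              proof -
                have kc: "b1 \<otimes>\<^bsub>G\<^esub> inv\<^bsub>G\<^esub> c2 \<in> carrier G" using k Kc by blast
                have k'c: "k' \<in> carrier G" using k'(1) Kc by blast
                have cm: "z \<otimes>\<^bsub>G\<^esub> k' = k' \<otimes>\<^bsub>G\<^esub> z" using comm k'(1) by blast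
                have "(z \<otimes>\<^bsub>G\<^esub> k') \<otimes>\<^bsub>G\<^esub> z = b1 \<otimes>\<^bsub>G\<^esub> inv\<^bsub>G\<^esub> c2" using gz k'(2) by simp
                then show ?thesis by (rule group.A6[OF grp z kc k'c cm])
              qed
              then have "z \<otimes>\<^bsub>G\<^esub> z \<in> K" using Kmi k k' by simp
              then show False using zz by simp
            qed
            then show ?thesis using c(1) by (simp add: E_def)
          next
            case (d c1)
            have k: "c1 \<otimes>\<^bsub>G\<^esub> inv\<^bsub>G\<^esub> b2 \<in> K" using Kmi cK d by blast
            have "g = z \<otimes>\<^bsub>G\<^esub> (c1 \<otimes>\<^bsub>G\<^esub> inv\<^bsub>G\<^esub> b2)"
              using group.A2[OF grp cK(2)[OF d(1)] cK(2)[OF d(2)] gc z] d(3) \<open>b1 = g \<otimes>\<^bsub>G\<^esub> b2\<close> by simp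
            then have "\<exists>k\<in>K. g = z \<otimes>\<^bsub>G\<^esub> k" using k by blast
            then show ?thesis using d by (auto simp: E_def mem_lcos)
          qed
        qed
        show ?thesis using E P by blast
      qed
      then obtain E where E: "E \<in> tau_iter G F r a"
        and P: "\<And>b1 b2. b1 \<in> ?B \<Longrightarrow> b2 \<in> ?B \<Longrightarrow> b1 = g \<otimes>\<^bsub>G\<^esub> b2 \<Longrightarrow> b1 \<in> E" by blast
      have "(x <#\<^bsub>G\<^esub> ?B) \<inter> (y <#\<^bsub>G\<^esub> ?B) \<subseteq> x <#\<^bsub>G\<^esub> E"
      proof
        fix w assume "w \<in> (x <#\<^bsub>G\<^esub> ?B) \<inter> (y <#\<^bsub>G\<^esub> ?B)"
        then have "w \<in> x <#\<^bsub>G\<^esub> ?B" "w \<in> y <#\<^bsub>G\<^esub> ?B" by auto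
        then have "\<exists>b1\<in>?B. w = x \<otimes>\<^bsub>G\<^esub> b1" "\<exists>b2\<in>?B. w = y \<otimes>\<^bsub>G\<^esub> b2"
          by (simp_all only: mem_lcos)
        then obtain b1 b2 where bb: "b1 \<in> ?B" "b2 \<in> ?B" "w = x \<otimes>\<^bsub>G\<^esub> b1" "w = y \<otimes>\<^bsub>G\<^esub> b2"
          by blast
        have "b1 = g \<otimes>\<^bsub>G\<^esub> b2" unfolding g_def
          using solve_eq[OF grp xy(1,2)] bb Bc by blast
        then have "b1 \<in> E" using P bb by blast
        then show "w \<in> x <#\<^bsub>G\<^esub> E" using bb(3) unfolding mem_lcos by blast
      qed
      moreover have "x <#\<^bsub>G\<^esub> E \<in> tau_iter G F r a" using tau_linv[OF grp wo F E xy(1)] .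
      ultimately have "(x <#\<^bsub>G\<^esub> ?B) \<inter> (y <#\<^bsub>G\<^esub> ?B) \<in> tau_iter G F r a"
        using tau_down[OF wo F] by blast
      then show "(x <#\<^bsub>G\<^esub> ?B) \<inter> (y <#\<^bsub>G\<^esub> ?B) \<in> ?S" using 1(4) by blast
    qed
    then show ?case using tau_iter_suc[OF wo bsuc, of G F] by simp
  qed
qed

theorem lemma6p3:
  fixes G :: "('a, 'b) monoid_scheme" and H K :: "'a set" and h :: "'a \<Rightarrow> 'a"
    and z :: 'a and F :: "'a set set" and A :: "'a set"
    and r :: "'o rel" and a b :: 'o
  assumes "group G"
    and "subgroup H G" and "subgroup K G" and "K \<subseteq> H"
    and "h \<in> iso (G\<lparr>carrier := H\<rparr>) (G\<lparr>carrier := K\<rparr>)"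
    and "z \<in> H" and "\<forall>k\<in>K. z \<otimes>\<^bsub>G\<^esub> k = k \<otimes>\<^bsub>G\<^esub> z"
    and "z \<otimes>\<^bsub>G\<^esub> z \<notin> K"
    and "left_invariant_ideal G F" and "h_invariant h H F"
    and "Well_order r" and "a \<in> Field r" and "b \<in> Field r"
    and "(a, b) \<in> r" and "a \<noteq> b"
    and "\<forall>c. (a, c) \<in> r \<and> (c, b) \<in> r \<longrightarrow> c = a \<or> c = b"
    and "A \<subseteq> H" and "A \<in> tau_iter G F r a"
  shows "h ` A \<union> (z <#\<^bsub>G\<^esub> (h ` A)) \<in> tau_iter G F r b"
proof -
  note grp = assms(1)
  interpret group G by (rule grp)
  have Kc: "K \<subseteq> carrier G" using assms(3) by (simp add: subgroup_def)
  have zc: "z \<in> carrier G" by (rule subgroup.mem_carrier[OF assms(2,6)])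
  have zK: "z \<notin> K"
  proof
    assume "z \<in> K"
    then have "z \<otimes>\<^bsub>G\<^esub> z \<in> K" using subgroup.m_closed[OF assms(3)] by blast
    then show False using assms(8) by simp
  qed
  have z1: "z \<noteq> \<one>\<^bsub>G\<^esub>"
  proof
    assume "z = \<one>\<^bsub>G\<^esub>"
    then have "z \<in> K" using subgroup.one_closed[OF assms(3)] by simp
    then show False using zK by simp
  qed
  have hA: "h ` A \<in> tau_iter G F r a"
    using tau_h[OF grp assms(11) assms(9) assms(2,3,4,5,10) zc z1 assms(17,18)] .
  have hAK: "h ` A \<subseteq> K" using iso_facts(1)[OF assms(5)] assms(17) by blast
  show ?thesis
    by (rule main_M[OF grp assms(11) assms(9) assms(3) zc assms(7,8) hAK hA]) (use assms(14,15) in simp)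
qed

end
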